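(* Let $\langle X,\leq\rangle$ be a countable dense linear order without endpoints, let $\Gamma$ be its automorphism group acting by application, and let $I$ be the ideal of subsets of $X$ that are well-ordered by $\leq$. Then $\Gamma\curvearrowright X, I$ is $\sigma$-complete.
   Context: For a group $\Gamma$ acting on $X$, an invariant ideal $I$ on $X$ and $a\subseteq X$, $\mathrm{pstab}(a)=\{\gamma\in\Gamma:\gamma\cdot x=x\ \forall x\in a\}$ and $\gamma\cdot b=\{\gamma\cdot x:x\in b\}$. The dynamical ideal is $\sigma$-complete if for every $a\in I$ and every sequence $\langle b_n:n\in\omega\rangle$ of sets in $I$ there are $\gamma_n\in\mathrm{pstab}(a)$ with $\bigcup_n\gamma_n\cdot b_n\in I$. *)

theory Defs
  imports "HOL-Library.Countable_Set"
begin

definition pstab :: "'g set \<Rightarrow> ('g \<Rightarrow> 'x \<Rightarrow> 'x) \<Rightarrow> 'x set \<Rightarrow> 'g set" where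
  "pstab G act a = {g \<in> G. \<forall>x\<in>a. act g x = x}"

definition sigma_complete :: "'g set \<Rightarrow> ('g \<Rightarrow> 'x \<Rightarrow> 'x) \<Rightarrow> 'x set set \<Rightarrow> bool" where
  "sigma_complete G act I \<longleftrightarrow>
     (\<forall>a\<in>I. \<forall>b :: nat \<Rightarrow> 'x set. (\<forall>n. b n \<in> I) \<longrightarrow>
        (\<exists>\<gamma> :: nat \<Rightarrow> 'g. (\<forall>n. \<gamma> n \<in> pstab G act a) \<and> (\<Union>n. act (\<gamma> n) ` b n) \<in> I))"

definition order_automorphisms :: "('a::linorder \<Rightarrow> 'a) set" where
  "order_automorphisms = {f. bij f \<and> (\<forall>x y. x \<le> y \<longleftrightarrow> f x \<le> f y)}"

definition well_ordered_set :: "'a::linorder set \<Rightarrow> bool" where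
  "well_ordered_set A \<longleftrightarrow> (\<forall>B \<subseteq> A. B \<noteq> {} \<longrightarrow> (\<exists>m\<in>B. \<forall>y\<in>B. m \<le> y))"

end

theory Submission
  imports Defs
begin


definition op_rel :: "('a::linorder \<times> 'a) set \<Rightarrow> bool" where
 "op_rel p \<longleftrightarrow> (\<forall>x y x' y'. (x,y)\<in>p \<longrightarrow> (x',y')\<in>p \<longrightarrow> (x<x' \<longleftrightarrow> y<y'))"

lemma op_rel_conv: "op_rel (p\<inverse>) = op_rel p" unfolding op_rel_def by auto

definition dlo_set :: "'a::linorder set \<Rightarrow> bool" where
 "dlo_set B \<longleftrightarrow> B \<noteq> {} \<and> (\<forall>x\<in>B. \<forall>y\<in>B. x<y \<longrightarrow> (\<exists>z\<in>B. x<z \<and> z<y))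
    \<and> (\<forall>x\<in>B. \<exists>y\<in>B. x<y) \<and> (\<forall>x\<in>B. \<exists>y\<in>B. y<x)"

lemma between:
  fixes B :: "'a::linorder set"
  assumes D: "dlo_set B"
   and f1: "finite Y1" and f2: "finite Y2" and s1: "Y1 \<subseteq> B" and s2: "Y2 \<subseteq> B"
   and lt: "\<forall>y1\<in>Y1. \<forall>y2\<in>Y2. y1<y2"
  shows "\<exists>b\<in>B. (\<forall>y\<in>Y1. y<b) \<and> (\<forall>y\<in>Y2. b<y)"
proof (cases "Y1 = {}")
  case True
  show ?thesis
  proof (cases "Y2 = {}")
    case True with \<open>Y1={}\<close> D show ?thesis unfolding dlo_set_def by auto
  next
    case False
    have "Min Y2 \<in> B" using False f2 s2 Min_in by blast
    then obtain b where "b\<in>B" "b < Min Y2" using D unfolding dlo_set_def by blast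
    then show ?thesis using \<open>Y1={}\<close> f2 by (meson Min_le empty_iff order_less_le_trans)
  qed
next
  case False
  have m1: "Max Y1 \<in> B" using False f1 s1 Max_in by blast
  show ?thesis
  proof (cases "Y2 = {}")
    case True
    obtain b where "b\<in>B" "Max Y1 < b" using m1 D unfolding dlo_set_def by blast
    then show ?thesis using True f1 by (meson Max_ge empty_iff order_le_less_trans)
  next
    case F2: False
    have m2: "Min Y2 \<in> B" using F2 f2 s2 Min_in by blast
    have "Max Y1 < Min Y2" using lt False F2 f1 f2 Max_in Min_in by blast
    then obtain b where "b\<in>B" "Max Y1 < b" "b < Min Y2" using m1 m2 D unfolding dlo_set_def by blast
    then show ?thesis using f1 f2 by (meson Max_ge Min_le order_le_less_trans order_less_le_trans)
  qed
qed

lemma forth: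
  fixes A B :: "'a::linorder set"
  assumes D: "dlo_set B" and fp: "finite p" and pAB: "p \<subseteq> A \<times> B" and op: "op_rel p" and aA: "a \<in> A"
  shows "\<exists>b\<in>B. op_rel (insert (a,b) p)"
proof (cases "\<exists>b. (a,b)\<in>p")
  case True
  then obtain b where ab: "(a,b)\<in>p" by blast
  then have "insert (a,b) p = p" by blast
  moreover have "b \<in> B" using ab pAB by auto
  ultimately show ?thesis using op by metis
next
  case False
  define Y1 where "Y1 = {y. \<exists>x. (x,y)\<in>p \<and> x<a}"
  define Y2 where "Y2 = {y. \<exists>x. (x,y)\<in>p \<and> a<x}"
  have "Y1 \<subseteq> snd ` p" "Y2 \<subseteq> snd ` p" unfolding Y1_def Y2_def by force+
  then have f: "finite Y1" "finite Y2" using fp finite_subset by blast+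
  have s: "Y1 \<subseteq> B" "Y2 \<subseteq> B" using pAB unfolding Y1_def Y2_def by auto
  have lt: "\<forall>y1\<in>Y1. \<forall>y2\<in>Y2. y1<y2"
    using op unfolding Y1_def Y2_def op_rel_def by (auto dest: less_trans)
  obtain b where b: "b\<in>B" "\<forall>y\<in>Y1. y<b" "\<forall>y\<in>Y2. b<y"
    using between[OF D f(1) f(2) s(1) s(2) lt] by blast
  have key: "\<And>x y. (x,y)\<in>p \<Longrightarrow> (x<a \<longrightarrow> y<b) \<and> (a<x \<longrightarrow> b<y) \<and> x \<noteq> a"
    using b False unfolding Y1_def Y2_def by blast
  have "op_rel (insert (a,b) p)"
    unfolding op_rel_def
  proof (intro allI impI)
    fix x y x' y' assume h: "(x,y) \<in> insert (a,b) p" "(x',y') \<in> insert (a,b) p"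
    show "x<x' \<longleftrightarrow> y<y'"
    proof (cases "(x,y) = (a,b)")
      case True
      show ?thesis
      proof (cases "(x',y') = (a,b)")
        case True with \<open>(x,y) = (a,b)\<close> show ?thesis by auto
      next
        case False
        then have "(x',y')\<in>p" using h by auto
        from key[OF this] \<open>(x,y) = (a,b)\<close> show ?thesis
          by (metis linorder_neqE less_asym prod.inject)
      qed
    next
      case False
      then have p1: "(x,y)\<in>p" using h by auto
      show ?thesis
      proof (cases "(x',y') = (a,b)")
        case True
        from key[OF p1] True show ?thesis
          by (metis linorder_neqE less_asym prod.inject)
      next
        case False
        then have "(x',y')\<in>p" using h by auto
        with p1 op show ?thesis unfolding op_rel_def by blast
      qed
    qed
  qed
  with b show ?thesis by blast
qed

lemma back_step:
  fixes A B :: "'a::linorder set"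
  assumes D: "dlo_set A" and fp: "finite p" and pAB: "p \<subseteq> A \<times> B" and op: "op_rel p" and bB: "b \<in> B"
  shows "\<exists>a\<in>A. op_rel (insert (a,b) p)"
proof -
  have "p\<inverse> \<subseteq> B \<times> A" using pAB by auto
  from forth[OF D _ this _ bB] fp op obtain a where "a\<in>A" "op_rel (insert (b,a) (p\<inverse>))"
    by (auto simp: op_rel_conv)
  moreover have "insert (b,a) (p\<inverse>) = (insert (a,b) p)\<inverse>" by auto
  ultimately show ?thesis by (metis op_rel_conv)
qed

lemma cantor:
  fixes A B :: "'a::linorder set"
  assumes cA: "countable A" and cB: "countable B" and DA: "dlo_set A" and DB: "dlo_set B"
  shows "\<exists>f. f ` A = B \<and> (\<forall>x\<in>A. \<forall>y\<in>A. x<y \<longrightarrow> f x < f y)"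
proof -
  have Ane: "A \<noteq> {}" and Bne: "B \<noteq> {}" using DA DB unfolding dlo_set_def by auto
  define ea where "ea = from_nat_into A"
  define eb where "eb = from_nat_into B"
  have eaA: "ea n \<in> A" for n using Ane unfolding ea_def by (simp add: from_nat_into)
  have ebB: "eb n \<in> B" for n using Bne unfolding eb_def by (simp add: from_nat_into)
  have rA: "\<exists>n. ea n = x" if "x\<in>A" for x using that cA unfolding ea_def by (simp add: from_nat_into_surj)
  have rB: "\<exists>n. eb n = x" if "x\<in>B" for x using that cB unfolding eb_def by (simp add: from_nat_into_surj)
  define fw where "fw p a = insert (a, SOME b. b\<in>B \<and> op_rel (insert (a,b) p)) p" for p a
  define bw where "bw p b = insert (SOME a. a\<in>A \<and> op_rel (insert (a,b) p), b) p" for p b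
  define Inv where "Inv p \<longleftrightarrow> finite p \<and> p \<subseteq> A\<times>B \<and> op_rel p" for p
  have fwI: "Inv (fw p a)" if "Inv p" "a\<in>A" for p a
  proof -
    have "\<exists>b. b\<in>B \<and> op_rel (insert (a,b) p)" using forth[OF DB, of p A a] that unfolding Inv_def by blast
    from someI_ex[OF this] that show ?thesis unfolding Inv_def fw_def by auto
  qed
  have bwI: "Inv (bw p b)" if "Inv p" "b\<in>B" for p b
  proof -
    have "\<exists>a. a\<in>A \<and> op_rel (insert (a,b) p)" using back_step[OF DA, of p B b] that unfolding Inv_def by blast
    from someI_ex[OF this] that show ?thesis unfolding Inv_def bw_def by auto
  qed
  define st where "st = rec_nat {} (\<lambda>n p. bw (fw p (ea n)) (eb n))"
  have st0: "st 0 = {}" and stS: "st (Suc n) = bw (fw (st n) (ea n)) (eb n)" for n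
    by (simp_all add: st_def)
  have inv: "Inv (st n)" for n
  proof (induction n)
    case 0 show ?case by (simp add: st0 Inv_def op_rel_def)
  next
    case (Suc n) show ?case unfolding stS by (intro bwI fwI Suc eaA ebB)
  qed
  have mono: "st n \<subseteq> st (Suc n)" for n unfolding stS fw_def bw_def by auto
  have monoLe: "st m \<subseteq> st n" if "m \<le> n" for m n
    using lift_Suc_mono_le[of st, OF mono that] .
  define R where "R = (\<Union>n. st n)"
  have opR: "op_rel R" unfolding op_rel_def
  proof (intro allI impI)
    fix x y x' y' assume "(x,y)\<in>R" "(x',y')\<in>R"
    then obtain m n where "(x,y)\<in>st m" "(x',y')\<in>st n" unfolding R_def by auto
    then have "(x,y)\<in>st (max m n)" "(x',y')\<in>st (max m n)" using monoLe by (meson max.cobounded1 max.cobounded2 subsetD)+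
    with inv[of "max m n"] show "x<x' \<longleftrightarrow> y<y'" unfolding Inv_def op_rel_def by blast
  qed
  have RAB: "R \<subseteq> A\<times>B" using inv unfolding R_def Inv_def by blast
  have domA: "\<exists>y. (x,y)\<in>R" if xA: "x\<in>A" for x
  proof -
    obtain n where "ea n = x" using rA xA by blast
    then have "(x, SOME b. b\<in>B \<and> op_rel (insert (x,b) (st n))) \<in> st (Suc n)"
      unfolding stS fw_def bw_def by auto
    then show ?thesis unfolding R_def by blast
  qed
  have ranB: "\<exists>x. (x,y)\<in>R" if yB: "y\<in>B" for y
  proof -
    obtain n where "eb n = y" using rB yB by blast
    then have "(SOME a. a\<in>A \<and> op_rel (insert (a,y) (fw (st n) (ea n))), y) \<in> st (Suc n)"
      unfolding stS bw_def by auto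
    then show ?thesis unfolding R_def by blast
  qed
  have uniq: "y = y'" if "(x,y)\<in>R" "(x,y')\<in>R" for x y y'
    using opR that unfolding op_rel_def by (metis less_irrefl linorder_neqE)
  define f where "f x = (SOME y. (x,y)\<in>R)" for x
  have fR: "(x, f x)\<in>R" if "x\<in>A" for x unfolding f_def using domA[OF that] by (rule someI_ex)
  have "f ` A = B"
  proof
    show "f ` A \<subseteq> B" using fR RAB by blast
    show "B \<subseteq> f ` A"
    proof
      fix y assume "y\<in>B"
      then obtain x where xy: "(x,y)\<in>R" using ranB by blast
      then have "x\<in>A" using RAB by blast
      with xy fR uniq have "f x = y" by blast
      with \<open>x\<in>A\<close> show "y \<in> f ` A" by blast
    qed
  qed
  moreover have "\<forall>x\<in>A. \<forall>y\<in>A. x<y \<longrightarrow> f x < f y" using fR opR unfolding op_rel_def by blast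
  ultimately show ?thesis by blast
qed

lemma aut_less: "f \<in> order_automorphisms \<Longrightarrow> (x < y) = (f x < f y)"
  unfolding order_automorphisms_def by (auto simp: less_le_not_le)

lemma aut_le: "f \<in> order_automorphisms \<Longrightarrow> (x \<le> y) = (f x \<le> f y)"
  unfolding order_automorphisms_def by auto

lemma aut_comp: "f \<in> order_automorphisms \<Longrightarrow> g \<in> order_automorphisms \<Longrightarrow> f \<circ> g \<in> order_automorphisms"
  unfolding order_automorphisms_def by (auto intro: bij_comp)

lemma aut_of_strict:
  fixes s :: "'a::linorder \<Rightarrow> 'a"
  assumes sm: "\<And>x y. x < y \<Longrightarrow> s x < s y" and su: "surj s"
  shows "s \<in> order_automorphisms"
proof -
  have le: "x \<le> y \<longleftrightarrow> s x \<le> s y" for x y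
    by (metis sm le_less not_le)
  have "inj s" by (metis sm injI linorder_neqE less_irrefl)
  with su have "bij s" by (simp add: bij_def)
  with le show ?thesis unfolding order_automorphisms_def by auto
qed

lemma dlo_below:
  fixes J :: "'a::linorder set"
  assumes dense: "\<And>x y::'a. x<y \<Longrightarrow> \<exists>z. x<z \<and> z<y"
   and conv: "\<And>x y z. x\<in>J \<Longrightarrow> y\<in>J \<Longrightarrow> x \<le> z \<Longrightarrow> z \<le> y \<Longrightarrow> z\<in>J"
   and nomin: "\<And>x. x\<in>J \<Longrightarrow> \<exists>y\<in>J. y<x" and pJ: "p\<in>J"
  shows "dlo_set {x\<in>J. x<p}"
  unfolding dlo_set_def
proof (intro conjI ballI impI)
  show "{x \<in> J. x < p} \<noteq> {}" using nomin[OF pJ] by auto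
next
  fix x y assume x: "x \<in> {x \<in> J. x < p}" and y: "y \<in> {x \<in> J. x < p}" and "x<y"
  then obtain z where "x<z" "z<y" using dense by blast
  then show "\<exists>z\<in>{x \<in> J. x < p}. x < z \<and> z < y" using x y conv[of x y z] by (auto intro: less_imp_le less_trans)
next
  fix x assume x: "x \<in> {x \<in> J. x < p}"
  then obtain z where "x<z" "z<p" using dense by blast
  then show "\<exists>y\<in>{x \<in> J. x < p}. x < y" using x pJ conv[of x p z] by (auto intro: less_imp_le)
next
  fix x assume x: "x \<in> {x \<in> J. x < p}"
  then obtain z where "z\<in>J" "z<x" using nomin by blast
  then show "\<exists>y\<in>{x \<in> J. x < p}. y < x" using x by auto
qed

lemma dlo_above:
  fixes J :: "'a::linorder set"
  assumes dense: "\<And>x y::'a. x<y \<Longrightarrow> \<exists>z. x<z \<and> z<y"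
   and conv: "\<And>x y z. x\<in>J \<Longrightarrow> y\<in>J \<Longrightarrow> x \<le> z \<Longrightarrow> z \<le> y \<Longrightarrow> z\<in>J"
   and nomax: "\<And>x. x\<in>J \<Longrightarrow> \<exists>y\<in>J. x<y" and pJ: "p\<in>J"
  shows "dlo_set {x\<in>J. p<x}"
  unfolding dlo_set_def
proof (intro conjI ballI impI)
  show "{x \<in> J. p < x} \<noteq> {}" using nomax[OF pJ] by auto
next
  fix x y assume x: "x \<in> {x \<in> J. p < x}" and y: "y \<in> {x \<in> J. p < x}" and "x<y"
  then obtain z where "x<z" "z<y" using dense by blast
  then show "\<exists>z\<in>{x \<in> J. p < x}. x < z \<and> z < y" using x y conv[of x y z] by (auto intro: less_imp_le less_trans)
next
  fix x assume x: "x \<in> {x \<in> J. p < x}"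
  then obtain z where "z\<in>J" "x<z" using nomax by blast
  then show "\<exists>y\<in>{x \<in> J. p < x}. x < y" using x by auto
next
  fix x assume x: "x \<in> {x \<in> J. p < x}"
  then obtain z where "p<z" "z<x" using dense by blast
  then show "\<exists>y\<in>{x \<in> J. p < x}. y < x" using x pJ conv[of p x z] by (auto intro: less_imp_le)
qed

lemma shift:
  fixes J :: "'a::linorder set"
  assumes cnt: "countable (UNIV::'a set)" and dense: "\<And>x y::'a. x<y \<Longrightarrow> \<exists>z. x<z \<and> z<y"
   and conv: "\<And>x y z. x\<in>J \<Longrightarrow> y\<in>J \<Longrightarrow> x \<le> z \<Longrightarrow> z \<le> y \<Longrightarrow> z\<in>J"
   and nomax: "\<And>x. x\<in>J \<Longrightarrow> \<exists>y\<in>J. x<y" and nomin: "\<And>x. x\<in>J \<Longrightarrow> \<exists>y\<in>J. y<x"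
   and pJ: "p\<in>J" and qJ: "q\<in>J"
  shows "\<exists>\<sigma>\<in>order_automorphisms. \<sigma> p = q \<and> (\<forall>x. x\<notin>J \<longrightarrow> \<sigma> x = x)"
proof -
  have cs: "countable S" for S :: "'a set" by (rule countable_subset[OF subset_UNIV cnt])
  have d1: "dlo_set {x\<in>J. x<p}" "dlo_set {x\<in>J. x<q}" "dlo_set {x\<in>J. p<x}" "dlo_set {x\<in>J. q<x}"
    by (rule dlo_below dlo_above; (fact dense conv nomin nomax pJ qJ)?; blast intro: dense conv nomin nomax pJ qJ)+
  obtain f1 where f1: "f1 ` {x\<in>J. x<p} = {x\<in>J. x<q}" "\<forall>x\<in>{x\<in>J. x<p}. \<forall>y\<in>{x\<in>J. x<p}. x<y \<longrightarrow> f1 x < f1 y"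
    using cantor[OF cs cs d1(1) d1(2)] by blast
  obtain f2 where f2: "f2 ` {x\<in>J. p<x} = {x\<in>J. q<x}" "\<forall>x\<in>{x\<in>J. p<x}. \<forall>y\<in>{x\<in>J. p<x}. x<y \<longrightarrow> f2 x < f2 y"
    using cantor[OF cs cs d1(3) d1(4)] by blast
  define s where "s x = (if x \<in> J then (if x < p then f1 x else if x = p then q else f2 x) else x)" for x
  have lo: "\<forall>j\<in>J. x<j" if xJ: "x\<notin>J" and xp: "x<p" for x
  proof
    fix j assume j: "j\<in>J"
    show "x<j"
    proof (rule ccontr)
      assume "\<not> x<j" then have "j \<le> x" by simp
      then have "x\<in>J" using conv[OF j pJ] xp by simp
      with xJ show False by simp
    qed
  qed
  have hi: "\<forall>j\<in>J. j<x" if xJ: "x\<notin>J" and xp: "p<x" for x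
  proof
    fix j assume j: "j\<in>J"
    show "j<x"
    proof (rule ccontr)
      assume "\<not> j<x" then have "x \<le> j" by simp
      then have "x\<in>J" using conv[OF pJ j] xp by simp
      with xJ show False by simp
    qed
  qed
  have sJ: "s x \<in> J" if xJ: "x\<in>J" for x
  proof -
    consider "x<p" | "x=p" | "p<x" by (metis linorder_neqE)
    then show ?thesis
    proof cases
      case 1 then have "f1 x \<in> {x\<in>J. x<q}" using f1(1) xJ by blast
      then show ?thesis using 1 xJ unfolding s_def by simp
    next
      case 2 then show ?thesis using qJ xJ unfolding s_def by simp
    next
      case 3 then have "f2 x \<in> {x\<in>J. q<x}" using f2(1) xJ by blast
      then show ?thesis using 3 xJ unfolding s_def by auto
    qed
  qed
  have sm: "s x < s y" if "x<y" for x y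
  proof (cases "x\<in>J")
    case xJ: True
    show ?thesis
    proof (cases "y\<in>J")
      case yJ: True
      have a1: "f1 x < q" if "x\<in>J" "x<p" for x using that f1(1) by blast
      have a2: "q < f2 x" if "x\<in>J" "p<x" for x using that f2(1) by blast
      consider "x<p" "y<p" | "x<p" "y=p" | "x<p" "p<y" | "x=p" "p<y" | "p<x" "p<y"
        using \<open>x<y\<close> by (metis linorder_neqE less_trans)
      then show ?thesis
      proof cases
        case 1 then show ?thesis using xJ yJ \<open>x<y\<close> f1(2) unfolding s_def by auto
      next
        case 2 then show ?thesis using xJ yJ a1 unfolding s_def by auto
      next
        case 3 then have "f1 x < q" "q < f2 y" using xJ yJ a1 a2 by auto
        then show ?thesis using xJ yJ 3 unfolding s_def by auto
      next
        case 4 then show ?thesis using xJ yJ a2 unfolding s_def by auto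
      next
        case 5 then show ?thesis using xJ yJ \<open>x<y\<close> f2(2) unfolding s_def by auto
      qed
    next
      case yJ: False
      have "p<y"
      proof (rule ccontr)
        assume "\<not> p<y" then have "y \<le> p" by simp
        then have "y\<in>J" using conv[OF xJ pJ] \<open>x<y\<close> by simp
        with yJ show False by simp
      qed
      then show ?thesis using hi[OF yJ] sJ[OF xJ] yJ unfolding s_def by auto
    qed
  next
    case xJ: False
    show ?thesis
    proof (cases "x<p")
      case True
      show ?thesis
      proof (cases "y\<in>J")
        case True then show ?thesis using lo[OF xJ \<open>x<p\<close>] sJ[OF True] xJ unfolding s_def by simp
      next
        case False then show ?thesis using xJ \<open>x<y\<close> unfolding s_def by simp
      qed
    next
      case False
      then have "p<x" using xJ pJ by (metis linorder_neqE)
      then have "y\<notin>J" using hi[OF xJ] \<open>x<y\<close> by (meson less_asym)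
      then show ?thesis using xJ \<open>x<y\<close> unfolding s_def by auto
    qed
  qed
  have su: "surj s"
  proof -
    have "y \<in> range s" for y
    proof (cases "y\<in>J")
      case False then have "s y = y" unfolding s_def by simp
      then show ?thesis using rangeI[of s y] by simp
    next
      case True
      consider "y<q" | "y=q" | "q<y" by (metis linorder_neqE)
      then show ?thesis
      proof cases
        case 1
        have "y \<in> f1 ` {x\<in>J. x<p}" using f1(1) True 1 by simp
        then obtain x where "x\<in>J" "x<p" "f1 x = y" by auto
        then have "s x = y" unfolding s_def by simp
        then show ?thesis using rangeI[of s x] by simp
      next
        case 2 then have "s p = y" using pJ unfolding s_def by simp
        then show ?thesis using rangeI[of s p] by simp
      next
        case 3
        have "y \<in> f2 ` {x\<in>J. p<x}" using f2(1) True 3 by simp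
        then obtain x where "x\<in>J" "p<x" "f2 x = y" by auto
        then have "s x = y" unfolding s_def by auto
        then show ?thesis using rangeI[of s x] by simp
      qed
    qed
    then show ?thesis by auto
  qed
  have "s \<in> order_automorphisms" by (rule aut_of_strict[OF sm su])
  moreover have "s p = q" using pJ unfolding s_def by auto
  moreover have "\<forall>x. x\<notin>J \<longrightarrow> s x = x" unfolding s_def by auto
  ultimately show ?thesis by blast
qed

lemma wo_subset: "well_ordered_set A \<Longrightarrow> B \<subseteq> A \<Longrightarrow> well_ordered_set B"
  unfolding well_ordered_set_def by blast

lemma wo_union:
  assumes A: "well_ordered_set A" and B: "well_ordered_set B"
  shows "well_ordered_set (A \<union> B)"
  unfolding well_ordered_set_def
proof (intro allI impI)
  fix C assume C: "C \<subseteq> A \<union> B" "C \<noteq> {}"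
  show "\<exists>m\<in>C. \<forall>y\<in>C. m \<le> y"
  proof (cases "C \<inter> A = {}")
    case True then have "C \<subseteq> B" using C by blast
    then show ?thesis using B C unfolding well_ordered_set_def by blast
  next
    case FA: False
    have "C \<inter> A \<subseteq> A" by blast
    then obtain mA where mA: "mA \<in> C \<inter> A" "\<forall>y\<in>C \<inter> A. mA \<le> y" using A FA unfolding well_ordered_set_def by blast
    show ?thesis
    proof (cases "C \<inter> B = {}")
      case True then have "C \<subseteq> A" using C by blast
      then show ?thesis using A C unfolding well_ordered_set_def by blast
    next
      case FB: False
      have "C \<inter> B \<subseteq> B" by blast
      then obtain mB where mB: "mB \<in> C \<inter> B" "\<forall>y\<in>C \<inter> B. mB \<le> y" using B FB unfolding well_ordered_set_def by blast
      have "\<forall>y\<in>C. min mA mB \<le> y" using mA mB C by (auto simp: min.coboundedI1 min.coboundedI2)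
      moreover have "min mA mB \<in> C" using mA mB by (auto simp: min_def)
      ultimately show ?thesis by blast
    qed
  qed
qed

lemma wo_UN_le: "(\<And>n. well_ordered_set (S n)) \<Longrightarrow> well_ordered_set (\<Union>n\<le>(K::nat). S n)"
proof (induction K)
  case 0 then show ?case by simp
next
  case (Suc K)
  have "(\<Union>n\<le>Suc K. S n) = (\<Union>n\<le>K. S n) \<union> S (Suc K)" by (simp add: atMost_Suc Un_commute)
  then show ?case using Suc wo_union by metis
qed

lemma wo_image_aut:
  assumes A: "well_ordered_set A" and f: "f \<in> order_automorphisms"
  shows "well_ordered_set (f ` A)"
  unfolding well_ordered_set_def
proof (intro allI impI)
  fix C assume C: "C \<subseteq> f ` A" "C \<noteq> {}"
  define C' where "C' = {x\<in>A. f x \<in> C}"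
  have "C' \<subseteq> A" "C' \<noteq> {}" using C unfolding C'_def by auto
  then obtain m where m: "m\<in>C'" "\<forall>y\<in>C'. m \<le> y" using A unfolding well_ordered_set_def by blast
  have "\<forall>y\<in>C. f m \<le> y"
  proof
    fix y assume "y\<in>C"
    then obtain x where "x\<in>A" "y = f x" using C by blast
    then have "x \<in> C'" using \<open>y\<in>C\<close> unfolding C'_def by auto
    then show "f m \<le> y" using m(2) aut_le[OF f] \<open>y = f x\<close> by blast
  qed
  moreover have "f m \<in> C" using m unfolding C'_def by auto
  ultimately show "\<exists>m\<in>C. \<forall>y\<in>C. m \<le> y" by blast
qed

definition Fset :: "'a::linorder set \<Rightarrow> 'a set" where
  "Fset a = {z. z\<in>a \<or> (\<forall>z'<z. \<exists>w\<in>a. z'<w \<and> w<z)}"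

definition cls :: "'a::linorder set \<Rightarrow> 'a \<Rightarrow> 'a set" where
  "cls F y = {u. \<forall>w\<in>F. (w<u \<longleftrightarrow> w<y) \<and> (u<w \<longleftrightarrow> y<w)}"

lemma a_sub_F: "a \<subseteq> Fset a" unfolding Fset_def by auto

lemma F_wo:
  assumes a: "well_ordered_set a"
  shows "well_ordered_set (Fset a)"
  unfolding well_ordered_set_def
proof (intro allI impI)
  fix B assume B: "B \<subseteq> Fset a" "B \<noteq> {}"
  define C where "C = {w\<in>a. \<exists>b\<in>B. b \<le> w}"
  show "\<exists>m\<in>B. \<forall>y\<in>B. m \<le> y"
  proof (cases "C = {}")
    case False
    have "C \<subseteq> a" unfolding C_def by auto
    then obtain c where c: "c\<in>C" "\<forall>y\<in>C. c \<le> y" using a False unfolding well_ordered_set_def by blast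
    show ?thesis
    proof (cases "\<exists>b\<in>B. b<c")
      case True
      then obtain b where b: "b\<in>B" "b<c" by blast
      have "\<forall>b'\<in>B. b \<le> b'"
      proof
        fix b' assume b': "b'\<in>B"
        show "b \<le> b'"
        proof (rule ccontr)
          assume "\<not> b \<le> b'" then have lt: "b' < b" by simp
          have "b \<notin> a"
          proof
            assume "b\<in>a" then have "b\<in>C" using b unfolding C_def by auto
            then show False using c b by (meson not_le)
          qed
          then have "\<forall>z'<b. \<exists>w\<in>a. z'<w \<and> w<b" using b B unfolding Fset_def by auto
          then obtain w where "w\<in>a" "b'<w" "w<b" using lt by blast
          then have "w\<in>C" using b' unfolding C_def by (blast intro: less_imp_le)
          then show False using c \<open>w<b\<close> b by (meson not_le less_trans)
        qed
      qed
      then show ?thesis using b by blast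
    next
      case False
      obtain b0 where "b0\<in>B" "b0 \<le> c" using c unfolding C_def by auto
      then have "b0 = c" using False by (meson le_less)
      then show ?thesis using False \<open>b0\<in>B\<close> by (meson not_le)
    qed
  next
    case True
    obtain b where b: "b\<in>B" using B by blast
    have "\<forall>b'\<in>B. b \<le> b'"
    proof
      fix b' assume b': "b'\<in>B"
      show "b \<le> b'"
      proof (rule ccontr)
        assume "\<not> b \<le> b'" then have lt: "b' < b" by simp
        have "b \<notin> a"
        proof
          assume "b\<in>a" then have "b\<in>C" using b unfolding C_def by auto
          then show False using True by simp
        qed
        then have "\<forall>z'<b. \<exists>w\<in>a. z'<w \<and> w<b" using b B unfolding Fset_def by auto
        then obtain w where "w\<in>a" "b'<w" "w<b" using lt by blast
        then have "w\<in>C" using b' unfolding C_def by (blast intro: less_imp_le)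
        then show False using True by simp
      qed
    qed
    then show ?thesis using b by blast
  qed
qed

lemma cls_refl: "y \<in> cls F y" unfolding cls_def by auto

lemma cls_eq: "u \<in> cls F y \<Longrightarrow> cls F u = cls F y" unfolding cls_def by auto

lemma cls_notF: "y \<notin> F \<Longrightarrow> u \<in> cls F y \<Longrightarrow> u \<notin> F"
proof
  assume "y \<notin> F" "u \<in> cls F y" "u \<in> F"
  then have "\<not> u<y" "\<not> y<u" unfolding cls_def by auto
  then have "u = y" by simp
  with \<open>y \<notin> F\<close> \<open>u \<in> F\<close> show False by simp
qed

lemma cls_conv: "x\<in>cls F y \<Longrightarrow> z\<in>cls F y \<Longrightarrow> x \<le> t \<Longrightarrow> t \<le> z \<Longrightarrow> t \<in> cls F y"
  unfolding cls_def by (auto intro: order_less_le_trans order_le_less_trans)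

lemma cls_aut:
  assumes g: "g \<in> order_automorphisms" and fx: "\<forall>w\<in>F. g w = w"
  shows "cls F (g z) = cls F z"
proof -
  have "(w < g z \<longleftrightarrow> w < z) \<and> (g z < w \<longleftrightarrow> z < w)" if "w\<in>F" for w
    using aut_less[OF g, of w z] aut_less[OF g, of z w] fx that by auto
  then show ?thesis unfolding cls_def by auto
qed

lemma cls_nomax:
  fixes F :: "'a::linorder set"
  assumes Fwo: "well_ordered_set F" and dense: "\<And>x y::'a::linorder. x<y \<Longrightarrow> \<exists>z. x<z \<and> z<y"
    and nomax: "\<And>x::'a. \<exists>y. x < y"
    and yF: "y \<notin> F" and z: "z \<in> cls F y"
  shows "\<exists>z'\<in>cls F y. z<z'"
proof -
  have zF: "z \<notin> F" using cls_notF[OF yF z] .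
  have ce: "cls F z = cls F y" using cls_eq[OF z] .
  show ?thesis
  proof (cases "\<exists>w\<in>F. z<w")
    case True
    define M where "M = {w\<in>F. z<w}"
    have "M \<subseteq> F" "M \<noteq> {}" using True unfolding M_def by auto
    then obtain m where m: "m\<in>M" "\<forall>w\<in>M. m \<le> w" using Fwo unfolding well_ordered_set_def by blast
    have "z<m" using m(1) unfolding M_def by simp
    obtain z' where z': "z<z'" "z'<m" using dense[OF \<open>z<m\<close>] by blast
    have "z' \<in> cls F z" unfolding cls_def
    proof (intro CollectI ballI conjI)
      fix w assume w: "w\<in>F"
      show "w<z' \<longleftrightarrow> w<z"
      proof
        assume "w<z'"
        show "w<z"
        proof (rule ccontr)
          assume "\<not> w<z"
          then have "z<w" using w zF by (metis linorder_neqE)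
          then have "m \<le> w" using m w unfolding M_def by auto
          then show False using \<open>w<z'\<close> z' by simp
        qed
      next
        assume "w<z" then show "w<z'" using z' by simp
      qed
      show "z'<w \<longleftrightarrow> z<w"
      proof
        assume "z'<w" then show "z<w" using z' by simp
      next
        assume "z<w" then have "m \<le> w" using m w unfolding M_def by auto
        then show "z'<w" using z' by simp
      qed
    qed
    then show ?thesis using z' ce by auto
  next
    case False
    obtain z' where z': "z<z'" using nomax by blast
    have "z' \<in> cls F z" unfolding cls_def
    proof (intro CollectI ballI conjI)
      fix w assume w: "w\<in>F"
      then have "w<z" using False zF by (metis linorder_neqE)
      then show "w<z' \<longleftrightarrow> w<z" using z' by simp
      show "z'<w \<longleftrightarrow> z<w" using \<open>w<z\<close> z' by (meson less_asym less_trans)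
    qed
    then show ?thesis using z' ce by auto
  qed
qed

lemma cls_nomin:
  fixes a :: "'a::linorder set"
  assumes dense: "\<And>x y::'a::linorder. x<y \<Longrightarrow> \<exists>z. x<z \<and> z<y"
    and yF: "y \<notin> Fset a" and z: "z \<in> cls (Fset a) y"
  shows "\<exists>z'\<in>cls (Fset a) y. z'<z"
proof -
  have zF: "z \<notin> Fset a" using cls_notF[OF yF z] .
  have ce: "cls (Fset a) z = cls (Fset a) y" using cls_eq[OF z] .
  obtain z' where z': "z'<z" "\<forall>w\<in>a. \<not>(z'<w \<and> w<z)" using zF unfolding Fset_def by auto
  have noF: "\<not>(z'<f \<and> f<z)" if f: "f \<in> Fset a" for f
  proof
    assume h: "z'<f \<and> f<z"
    show False
    proof (cases "f\<in>a")
      case True then show False using z' h by blast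
    next
      case False
      then have "\<forall>u<f. \<exists>w\<in>a. u<w \<and> w<f" using f unfolding Fset_def by auto
      then obtain w where "w\<in>a" "z'<w" "w<f" using h by blast
      then show False using z' h by (meson less_trans)
    qed
  qed
  obtain z'' where z'': "z'<z''" "z''<z" using dense z'(1) by blast
  have "z'' \<in> cls (Fset a) z" unfolding cls_def
  proof (intro CollectI ballI conjI)
    fix w assume w: "w\<in>Fset a"
    have nw: "\<not>(z'<w \<and> w<z)" using noF[OF w] .
    show "w<z'' \<longleftrightarrow> w<z"
    proof
      assume "w<z''" then show "w<z" using z'' by simp
    next
      assume "w<z"
      then show "w<z''" using nw z'' by (meson linorder_not_le order_le_less_trans)
    qed
    show "z''<w \<longleftrightarrow> z<w"
    proof
      assume "z''<w"
      show "z<w"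
      proof (rule ccontr)
        assume "\<not> z<w"
        then have "w<z" using w zF by (metis linorder_neqE)
        then show False using nw z'' \<open>z''<w\<close> by (meson less_trans)
      qed
    next
      assume "z<w" then show "z''<w" using z'' by simp
    qed
  qed
  then show ?thesis using z'' ce by auto
qed



lemma id_aut: "id \<in> order_automorphisms" unfolding order_automorphisms_def by simp

lemma fin_above:
  fixes J :: "'a::linorder set"
  assumes ne: "e \<in> J" and nomax: "\<And>x. x\<in>J \<Longrightarrow> \<exists>y\<in>J. x<y" and fin: "finite S" and SJ: "S \<subseteq> J"
  shows "\<exists>q\<in>J. \<forall>s\<in>S. s<q"
proof (cases "S = {}")
  case True then show ?thesis using ne by blast
next
  case False
  then have "Max S \<in> J" using fin SJ Max_in by blast
  then obtain q where "q\<in>J" "Max S < q" using nomax by blast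
  then show ?thesis using fin by (meson Max_ge order_le_less_trans)
qed

lemma stepD:
  fixes a :: "'a::linorder set" and xs :: "nat \<Rightarrow> 'a"
  assumes cnt: "countable (UNIV :: 'a set)"
    and dense: "\<And>x y::'a. x < y \<Longrightarrow> \<exists>z. x < z \<and> z < y"
    and nomin: "\<And>x::'a. \<exists>y. y < x"
    and nomax: "\<And>x::'a. \<exists>y. x < y"
    and awo: "well_ordered_set a" and bwo: "well_ordered_set b"
  shows "\<exists>g\<in>order_automorphisms. (\<forall>w\<in>Fset a. g w = w) \<and>
           (\<forall>z\<in>b. z \<notin> Fset a \<longrightarrow> (\<forall>k<n. xs k \<in> cls (Fset a) z \<longrightarrow> xs k < g z))"
proof (induction n)
  case 0 show ?case by (rule bexI[of _ id]) (auto simp: id_aut)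
next
  case (Suc n)
  define F where "F = Fset a"
  have Fwo: "well_ordered_set F" unfolding F_def using F_wo[OF awo] .
  obtain g where g: "g\<in>order_automorphisms" "\<forall>w\<in>F. g w = w"
     "\<forall>z\<in>b. z \<notin> F \<longrightarrow> (\<forall>k<n. xs k \<in> cls F z \<longrightarrow> xs k < g z)"
    using Suc unfolding F_def by blast
  have gcls: "cls F (g z) = cls F z" for z using cls_aut[OF g(1) g(2)] .
  have "\<exists>g\<in>order_automorphisms. (\<forall>w\<in>F. g w = w) \<and>
           (\<forall>z\<in>b. z \<notin> F \<longrightarrow> (\<forall>k<Suc n. xs k \<in> cls F z \<longrightarrow> xs k < g z))"
  proof (cases "xs n \<in> F")
    case True
    have "\<forall>z\<in>b. z \<notin> F \<longrightarrow> (\<forall>k<Suc n. xs k \<in> cls F z \<longrightarrow> xs k < g z)"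
    proof (intro ballI impI allI)
      fix z k assume z: "z\<in>b" "z\<notin>F" and k: "k < Suc n" and xk: "xs k \<in> cls F z"
      have "k \<noteq> n" using cls_notF[OF z(2) xk] True by blast
      then have "k<n" using k by simp
      then show "xs k < g z" using g(3) z xk by blast
    qed
    then show ?thesis using g by blast
  next
    case xnF: False
    define J where "J = cls F (xs n)"
    define b' where "b' = g ` b"
    have b'wo: "well_ordered_set b'" unfolding b'_def using wo_image_aut[OF bwo g(1)] .
    have gzJ: "g z \<in> J" if "xs n \<in> cls F z" for z
    proof -
      have "cls F (xs n) = cls F z" using cls_eq[OF that] .
      then show ?thesis unfolding J_def using cls_refl[of "g z" F] gcls by simp
    qed
    show ?thesis
    proof (cases "b' \<inter> J = {}")
      case True
      have "\<forall>z\<in>b. z \<notin> F \<longrightarrow> (\<forall>k<Suc n. xs k \<in> cls F z \<longrightarrow> xs k < g z)"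
      proof (intro ballI impI allI)
        fix z k assume z: "z\<in>b" "z\<notin>F" and k: "k < Suc n" and xk: "xs k \<in> cls F z"
        have "k \<noteq> n"
        proof
          assume "k = n"
          then have "g z \<in> J" using gzJ xk by simp
          moreover have "g z \<in> b'" using z unfolding b'_def by simp
          ultimately show False using True by blast
        qed
        then have "k<n" using k by simp
      then show "xs k < g z" using g(3) z xk by blast
      qed
      then show ?thesis using g by blast
    next
      case False
      have "b' \<inter> J \<subseteq> b'" by blast
      then obtain m where m: "m \<in> b' \<inter> J" "\<forall>y\<in>b' \<inter> J. m \<le> y"
        using b'wo False unfolding well_ordered_set_def by blast
      have conv: "\<And>x y z. x\<in>J \<Longrightarrow> y\<in>J \<Longrightarrow> x \<le> z \<Longrightarrow> z \<le> y \<Longrightarrow> z\<in>J"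
        unfolding J_def by (rule cls_conv)
      have nmax: "\<And>x. x\<in>J \<Longrightarrow> \<exists>y\<in>J. x<y"
        unfolding J_def by (rule cls_nomax[OF Fwo dense nomax xnF])
      have nmin: "\<And>x. x\<in>J \<Longrightarrow> \<exists>y\<in>J. y<x"
        unfolding J_def F_def by (rule cls_nomin[OF dense]) (use xnF F_def in auto)
      define S where "S = xs ` {k. k \<le> n \<and> xs k \<in> J}"
      have "finite S" unfolding S_def by simp
      moreover have "S \<subseteq> J" unfolding S_def by auto
      ultimately have "\<exists>q\<in>J. \<forall>s\<in>S. s<q"
        by (intro fin_above[of "xs n" J S]) (simp_all add: J_def cls_refl nmax[unfolded J_def])
      then obtain q where q: "q\<in>J" "\<forall>s\<in>S. s<q" by blast
      have "\<exists>\<sigma>\<in>order_automorphisms. \<sigma> m = q \<and> (\<forall>x. x\<notin>J \<longrightarrow> \<sigma> x = x)"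
        apply (rule shift)
              apply (fact cnt)
             apply (fact dense)
            apply (fact conv)
           apply (fact nmax)
          apply (fact nmin)
        using m q by auto
      then obtain \<sigma> where \<sigma>: "\<sigma>\<in>order_automorphisms" "\<sigma> m = q" "\<forall>x. x\<notin>J \<longrightarrow> \<sigma> x = x"
        by blast
      have JF: "w \<notin> J" if "w\<in>F" for w using cls_notF[OF xnF] that unfolding J_def by blast
      have "\<sigma> \<circ> g \<in> order_automorphisms" using aut_comp[OF \<sigma>(1) g(1)] .
      moreover have "\<forall>w\<in>F. (\<sigma> \<circ> g) w = w" using g(2) \<sigma>(3) JF by simp
      moreover have "\<forall>z\<in>b. z \<notin> F \<longrightarrow> (\<forall>k<Suc n. xs k \<in> cls F z \<longrightarrow> xs k < (\<sigma> \<circ> g) z)"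
      proof (intro ballI impI allI)
        fix z k assume z: "z\<in>b" "z\<notin>F" and k: "k < Suc n" and xk: "xs k \<in> cls F z"
        show "xs k < (\<sigma> \<circ> g) z"
        proof (cases "g z \<in> J")
          case True
          then have "m \<le> g z" using m z unfolding b'_def by blast
          then have "\<sigma> m \<le> \<sigma> (g z)" using aut_le[OF \<sigma>(1)] by blast
          then have "q \<le> \<sigma> (g z)" using \<sigma>(2) by simp
          moreover have "xs k \<in> J"
          proof -
            have "cls F z = J" using gcls[of z] cls_eq[OF True[unfolded J_def]] unfolding J_def by simp
            then show ?thesis using xk by simp
          qed
          then have "xs k \<in> S" using k unfolding S_def by auto
          then have "xs k < q" using q by blast
          ultimately show ?thesis by simp
        next
          case False
          then have "k \<noteq> n" using gzJ xk by blast
          then have "k<n" using k by simp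
          then have "xs k < g z" using g(3) z xk by blast
          then show ?thesis using False \<sigma>(3) by simp
        qed
      qed
      ultimately show ?thesis by blast
    qed
  qed
  then show ?case unfolding F_def .
qed

theorem mainTheorem12:
  fixes X :: "'a::linorder itself"
  assumes "countable (UNIV :: 'a set)"
    and "\<And>x y::'a. x < y \<Longrightarrow> \<exists>z. x < z \<and> z < y"
    and "\<And>x::'a. \<exists>y. y < x"
    and "\<And>x::'a. \<exists>y. x < y"
  shows "sigma_complete (order_automorphisms :: ('a \<Rightarrow> 'a) set) (\<lambda>f x. f x)
           {A :: 'a set. well_ordered_set A}"
  unfolding sigma_complete_def
proof (intro ballI allI impI)
  fix a :: "'a set" and b :: "nat \<Rightarrow> 'a set"
  assume aI: "a \<in> {A. well_ordered_set A}" and bI: "\<forall>n. b n \<in> {A. well_ordered_set A}"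
  have awo: "well_ordered_set a" using aI by simp
  have bwo: "well_ordered_set (b n)" for n using bI by simp
  define F where "F = Fset a"
  have Fwo: "well_ordered_set F" unfolding F_def using F_wo[OF awo] .
  define xs :: "nat \<Rightarrow> 'a" where "xs = from_nat_into UNIV"
  have xsurj: "\<exists>n. xs n = x" for x unfolding xs_def using from_nat_into_surj[OF assms(1)] by blast
  have ex: "\<exists>g\<in>order_automorphisms. (\<forall>w\<in>F. g w = w) \<and>
           (\<forall>z\<in>b n. z \<notin> F \<longrightarrow> (\<forall>k<n. xs k \<in> cls F z \<longrightarrow> xs k < g z))" for n
    unfolding F_def
    apply (rule stepD)
         apply (fact assms(1))
        apply (fact assms(2))
       apply (fact assms(3))
      apply (fact assms(4))
     apply (fact awo)
    apply (fact bwo)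
    done
  have "\<exists>G. \<forall>n. G n \<in> order_automorphisms \<and> (\<forall>w\<in>F. G n w = w) \<and>
           (\<forall>z\<in>b n. z \<notin> F \<longrightarrow> (\<forall>k<n. xs k \<in> cls F z \<longrightarrow> xs k < G n z))"
    by (rule choice) (use ex in blast)
  then obtain g where gall: "\<forall>n. g n \<in> order_automorphisms \<and> (\<forall>w\<in>F. g n w = w) \<and>
           (\<forall>z\<in>b n. z \<notin> F \<longrightarrow> (\<forall>k<n. xs k \<in> cls F z \<longrightarrow> xs k < g n z))" by blast
  have g: "\<And>n. g n \<in> order_automorphisms" "\<And>n. \<forall>w\<in>F. g n w = w"
      "\<And>n. \<forall>z\<in>b n. z \<notin> F \<longrightarrow> (\<forall>k<n. xs k \<in> cls F z \<longrightarrow> xs k < g n z)"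
    using gall by blast+
  have "\<forall>n. g n \<in> pstab order_automorphisms (\<lambda>f x. f x) a"
    unfolding pstab_def using g(1,2) a_sub_F[of a] unfolding F_def by blast
  moreover have "(\<Union>n. g n ` b n) \<in> {A. well_ordered_set A}"
  proof -
    define U where "U = (\<Union>n. g n ` b n)"
    have "well_ordered_set U" unfolding well_ordered_set_def
    proof (intro allI impI)
      fix D assume D: "D \<subseteq> U" "D \<noteq> {}"
      define W where "W = {w\<in>F. \<exists>d\<in>D. d \<le> w}"
      show "\<exists>m\<in>D. \<forall>y\<in>D. m \<le> y"
      proof (cases "\<exists>ds\<in>D. \<forall>w\<in>W. ds < w")
        case True
        then obtain ds where ds: "ds\<in>D" "\<forall>w\<in>W. ds < w" by blast
        have claim: "\<not>(d \<le> w \<and> w \<le> ds)" if "d\<in>D" "w\<in>F" for d w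
        proof
          assume h: "d \<le> w \<and> w \<le> ds"
          then have "w\<in>W" unfolding W_def using that by blast
          then have "ds < w" using ds(2) by blast
          then show False using h leD by blast
        qed
        obtain K where K: "xs K = ds" using xsurj by blast
        define D' where "D' = {d\<in>D. d \<le> ds}"
        have "D' \<subseteq> (\<Union>n\<le>K. g n ` b n)"
        proof
          fix d assume d: "d\<in>D'"
          then have dD: "d\<in>D" "d \<le> ds" unfolding D'_def by auto
          have "d \<in> U" using D(1) dD(1) by blast
          then obtain n where "d \<in> g n ` b n" unfolding U_def by blast
          then obtain z where nz: "z\<in>b n" "d = g n z" by blast
          have dF: "d \<notin> F" using claim[OF dD(1)] dD(2) by blast
          have zF: "z \<notin> F" using g(2)[of n] nz dF by auto
          have "ds \<in> cls F d" unfolding cls_def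
          proof (intro CollectI ballI conjI)
            fix w assume w: "w\<in>F"
            have c: "\<not>(d \<le> w \<and> w \<le> ds)" using claim[OF dD(1) w] .
            show "w<ds \<longleftrightarrow> w<d"
            proof
              assume "w<ds"
              show "w<d"
              proof (rule ccontr)
                assume "\<not> w<d" then have "d \<le> w" by simp
                then show False using c \<open>w<ds\<close> by simp
              qed
            next
              assume "w<d" then show "w<ds" using dD(2) by simp
            qed
            show "ds<w \<longleftrightarrow> d<w"
            proof
              assume "ds<w" then show "d<w" using dD(2) by simp
            next
              assume "d<w"
              show "ds<w"
              proof (rule ccontr)
                assume "\<not> ds<w" then have "w \<le> ds" by simp
                then show False using c \<open>d<w\<close> by simp
              qed
            qed
          qed
          moreover have "cls F d = cls F z" using cls_aut[OF g(1) g(2), of n z] nz by simp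
          ultimately have xk: "xs K \<in> cls F z" using K by simp
          have "n \<le> K"
          proof (rule ccontr)
            assume "\<not> n \<le> K" then have "K < n" by simp
            then have "xs K < g n z" using g(3)[of n] nz zF xk by blast
            then show False using K nz dD(2) by simp
          qed
          then show "d \<in> (\<Union>n\<le>K. g n ` b n)" using nz by blast
        qed
        moreover have "well_ordered_set (\<Union>n\<le>K. g n ` b n)"
          by (rule wo_UN_le) (rule wo_image_aut[OF bwo g(1)])
        ultimately have "well_ordered_set D'" using wo_subset by blast
        moreover have "D' \<noteq> {}" using ds unfolding D'_def by auto
        ultimately obtain m where m: "m\<in>D'" "\<forall>y\<in>D'. m \<le> y" unfolding well_ordered_set_def by blast
        have "\<forall>y\<in>D. m \<le> y"
        proof
          fix y assume y: "y\<in>D"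
          show "m \<le> y"
          proof (cases "y \<le> ds")
            case True then show ?thesis using m y unfolding D'_def by blast
          next
            case False
            have "m \<le> ds" using m(1) unfolding D'_def by simp
            then show ?thesis using False by simp
          qed
        qed
        then show ?thesis using m unfolding D'_def by blast
      next
        case False
        then have allw: "\<forall>d\<in>D. \<exists>w\<in>W. w \<le> d" by (meson not_le)
        have "W \<subseteq> F" "W \<noteq> {}" using D allw unfolding W_def by auto
        then obtain w0 where w0: "w0\<in>W" "\<forall>w\<in>W. w0 \<le> w" using Fwo unfolding well_ordered_set_def by blast
        then obtain d1 where d1: "d1\<in>D" "d1 \<le> w0" unfolding W_def by blast
        have "\<forall>d\<in>D. d1 \<le> d"
        proof
          fix d assume "d\<in>D"
          then obtain w where "w\<in>W" "w \<le> d" using allw by blast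
          then show "d1 \<le> d" using w0 d1 by (meson order_trans)
        qed
        then show ?thesis using d1 by blast
      qed
    qed
    then show ?thesis unfolding U_def by simp
  qed
  ultimately show "\<exists>\<gamma>. (\<forall>n. \<gamma> n \<in> pstab order_automorphisms (\<lambda>f x. f x) a) \<and>
        (\<Union>n. (\<lambda>f x. f x) (\<gamma> n) ` b n) \<in> {A. well_ordered_set A}" by blast
qed

end
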